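(* There exist absolute constants $C_1,C_2>0$ and $C_3>1$ with the following property. Let $(V_o,w_o,\mu_o)$ be any simple weighted graph with adapted weight $\sigma_o$, and let $(V,w,\mu)$ be its modified graph with any weight $\mathfrak n$. Define the bounded function $\mathcal U$ on $V$ by $\mathcal U(x)=-C_1$ for $x\in V\setminus V_o$ and $\mathcal U(x)=C_2$ for $x\in V_o$. Then there exists a function $\varphi$ on $V$ with $1\le\varphi\le C_3$ and \[(\Delta+\mathcal U)\varphi\ge0\quad\text{on }V,\] where $\Delta$ is the formal Laplacian of $(V,w,\mu)$.
   Context: **Weighted graphs.** A simple weighted graph $(V,w,\mu)$ consists of a countably infinite set $V$, a symmetric function $w:V\times V\to[0,\infty)$ and a function $\mu:V\to(0,\infty)$. The graph with edges $\{x\sim y:w(x,y)>0\}$ is assumed to be locally finite, connected, and without loops or multiple edges. **Adapted weights.** An adapted weight is a symmetric $\sigma:E\to(0,1]$ with $\frac1{\mu(x)}\sum_y w(x,y)\sigma(x,y)^2\le1$ for all $x$. **Formal Laplacian.** $\Delta u(x)=\frac1{\mu(x)}\sum_y w(x,y)(u(x)-u(y))$. **Modified graph.** Fix an orientation $E_o^+$ of $E_o$, and let $\mathfrak n:E_o\to\mathbb N_+$ be symmetric with $\mathfrak n\ge2$. For $e=(x,y)\in E_o^+$, add distinct new vertices $x^e_1,\dots,x^e_{\mathfrak n(e)-1}$, set $x_0^e=x$, $x^e_{\mathfrak n(e)}=y$, and replace the edge $x\sim y$ by the path $x^e_0\sim\cdots\sim x^e_{\mathfrak n(e)}$. Weights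 and measure: - $w(x^e_i,x^e_{i+1})=\mathfrak n(e)w_o(e)$, symmetric, and $w=0$ otherwise; - $\mu=\mu_o$ on $V_o$, and $\mu(x^e_i)=2w_o(e)\sigma_o(e)^2/\mathfrak n(e)$ for $1\le i\le\mathfrak n(e)-1$. *)

theory Defs
  imports "HOL-Analysis.Analysis"
begin

text \<open>Simple weighted graphs. The countably infinite vertex set is taken, without loss of
generality, to be an infinite subset of nat (so that constants can be absolute).\<close>

definition simple_weighted_graph :: "nat set \<Rightarrow> (nat \<Rightarrow> nat \<Rightarrow> real) \<Rightarrow> (nat \<Rightarrow> real) \<Rightarrow> bool" where
  "simple_weighted_graph V w \<mu> \<longleftrightarrow>
     infinite V \<and>
     (\<forall>x y. w x y = w y x) \<and> (\<forall>x y. w x y \<ge> 0) \<and>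
     (\<forall>x y. w x y > 0 \<longrightarrow> x \<in> V \<and> y \<in> V) \<and>
     (\<forall>x\<in>V. \<mu> x > 0) \<and>
     (\<forall>x. w x x = 0) \<and>
     (\<forall>x\<in>V. finite {y. w x y > 0}) \<and>
     (\<forall>x\<in>V. \<forall>y\<in>V. (x, y) \<in> {(a, b). w a b > 0}\<^sup>*)"

definition edges :: "(nat \<Rightarrow> nat \<Rightarrow> real) \<Rightarrow> (nat \<times> nat) set" where
  "edges w = {(x, y). w x y > 0}"

definition adapted_weight ::
  "(nat \<Rightarrow> nat \<Rightarrow> real) \<Rightarrow> (nat \<Rightarrow> real) \<Rightarrow> (nat \<Rightarrow> nat \<Rightarrow> real) \<Rightarrow> bool" where
  "adapted_weight w \<mu> \<sigma> \<longleftrightarrow>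
     (\<forall>(x, y) \<in> edges w. \<sigma> x y = \<sigma> y x \<and> 0 < \<sigma> x y \<and> \<sigma> x y \<le> 1) \<and>
     (\<forall>x. (\<exists>y. w x y > 0) \<longrightarrow>
        (1 / \<mu> x) * (\<Sum>y\<in>{y. w x y > 0}. w x y * (\<sigma> x y)\<^sup>2) \<le> 1)"

definition orientation :: "(nat \<Rightarrow> nat \<Rightarrow> real) \<Rightarrow> (nat \<times> nat) set \<Rightarrow> bool" where
  "orientation w Ep \<longleftrightarrow> Ep \<subseteq> edges w \<and>
     (\<forall>(x, y) \<in> edges w. ((x, y) \<in> Ep) \<noteq> ((y, x) \<in> Ep))"

definition admissible_n :: "(nat \<Rightarrow> nat \<Rightarrow> real) \<Rightarrow> (nat \<Rightarrow> nat \<Rightarrow> nat) \<Rightarrow> bool" where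
  "admissible_n w nn \<longleftrightarrow> (\<forall>(x, y) \<in> edges w. nn x y = nn y x \<and> nn x y \<ge> 2)"

text \<open>Vertices of the modified graph: original vertices, and new vertices x^e_i
  for e = (x,y) in the orientation, 1 \<le> i \<le> n(e)-1.\<close>
datatype mvert = Orig nat | New nat nat nat

definition pv :: "nat \<Rightarrow> nat \<Rightarrow> nat \<Rightarrow> nat \<Rightarrow> mvert" where
  "pv x y n i = (if i = 0 then Orig x else if i = n then Orig y else New x y i)"

definition mod_V :: "nat set \<Rightarrow> (nat \<times> nat) set \<Rightarrow> (nat \<Rightarrow> nat \<Rightarrow> nat) \<Rightarrow> mvert set" where
  "mod_V V Ep nn = Orig ` V \<union> {New x y i | x y i. (x, y) \<in> Ep \<and> 1 \<le> i \<and> i \<le> nn x y - 1}"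

definition mod_edge :: "(nat \<times> nat) set \<Rightarrow> (nat \<Rightarrow> nat \<Rightarrow> nat) \<Rightarrow> mvert \<Rightarrow> mvert \<Rightarrow> nat \<Rightarrow> nat \<Rightarrow> nat \<Rightarrow> bool" where
  "mod_edge Ep nn u v x y i \<longleftrightarrow> (x, y) \<in> Ep \<and> i < nn x y \<and>
     ((u = pv x y (nn x y) i \<and> v = pv x y (nn x y) (Suc i)) \<or>
      (v = pv x y (nn x y) i \<and> u = pv x y (nn x y) (Suc i)))"

definition mod_w :: "(nat \<Rightarrow> nat \<Rightarrow> real) \<Rightarrow> (nat \<times> nat) set \<Rightarrow> (nat \<Rightarrow> nat \<Rightarrow> nat) \<Rightarrow> mvert \<Rightarrow> mvert \<Rightarrow> real" where
  "mod_w w Ep nn u v =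
     (if \<exists>x y i. mod_edge Ep nn u v x y i
      then (case SOME e. \<exists>i. mod_edge Ep nn u v (fst e) (snd e) i of
              (x, y) \<Rightarrow> real (nn x y) * w x y)
      else 0)"

definition mod_mu :: "(nat \<Rightarrow> nat \<Rightarrow> real) \<Rightarrow> (nat \<Rightarrow> real) \<Rightarrow> (nat \<Rightarrow> nat \<Rightarrow> real) \<Rightarrow> (nat \<Rightarrow> nat \<Rightarrow> nat) \<Rightarrow> mvert \<Rightarrow> real" where
  "mod_mu w \<mu> \<sigma> nn v = (case v of Orig x \<Rightarrow> \<mu> x
       | New x y i \<Rightarrow> 2 * w x y * (\<sigma> x y)\<^sup>2 / real (nn x y))"

definition laplacian :: "('v \<Rightarrow> 'v \<Rightarrow> real) \<Rightarrow> ('v \<Rightarrow> real) \<Rightarrow> ('v \<Rightarrow> real) \<Rightarrow> 'v \<Rightarrow> real" where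
  "laplacian w \<mu> u x = (1 / \<mu> x) * (\<Sum>y\<in>{y. w x y \<noteq> 0}. w x y * (u x - u y))"

end

theory Submission
  imports Defs
begin


lemma pv_New_iff: "pv x y n i = New a b j \<longleftrightarrow> i \<noteq> 0 \<and> i \<noteq> n \<and> a = x \<and> b = y \<and> j = i"
  by (auto simp: pv_def)
lemma pv_Orig_iff: "pv x y n i = Orig z \<longleftrightarrow> (i = 0 \<and> z = x) \<or> (i \<noteq> 0 \<and> i = n \<and> z = y)"
  by (auto simp: pv_def)

lemma edge_unique:
  assumes n2: "\<forall>(a,b)\<in>Ep. nn a b \<ge> 2"
    and e1: "mod_edge Ep nn u v x y i" and e2: "mod_edge Ep nn u v x' y' i'"
  shows "x' = x \<and> y' = y"
proof -
  have "nn x y \<ge> 2" "nn x' y' \<ge> 2" using n2 e1 e2 by (auto simp: mod_edge_def)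
  then show ?thesis using e1 e2 unfolding mod_edge_def pv_def
    by (auto split: if_splits)
qed

lemma mod_w_val:
  assumes n2: "\<forall>(a,b)\<in>Ep. nn a b \<ge> 2"
    and e1: "mod_edge Ep nn u v x y i"
  shows "mod_w w Ep nn u v = real (nn x y) * w x y"
proof -
  have ex: "\<exists>x y i. mod_edge Ep nn u v x y i" using e1 by blast
  define e where "e = (SOME e. \<exists>i. mod_edge Ep nn u v (fst e) (snd e) i)"
  have "\<exists>i. mod_edge Ep nn u v (fst e) (snd e) i"
    unfolding e_def by (rule someI[of _ "(x,y)"]) (use e1 in auto)
  then obtain i' where "mod_edge Ep nn u v (fst e) (snd e) i'" by blast
  from edge_unique[OF n2 e1 this] have "e = (x, y)" by (cases e) auto
  then show ?thesis unfolding mod_w_def using ex e_def by simp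
qed



definition psi :: "(nat \<Rightarrow> nat \<Rightarrow> real) \<Rightarrow> (nat \<Rightarrow> nat \<Rightarrow> nat) \<Rightarrow> nat \<Rightarrow> nat \<Rightarrow> nat \<Rightarrow> real" where
  "psi \<sigma> nn a b j = 1 + 2 * (\<sigma> a b)\<^sup>2 * (real j / real (nn a b)) * (1 - real j / real (nn a b))"

definition phi :: "(nat \<Rightarrow> nat \<Rightarrow> real) \<Rightarrow> (nat \<Rightarrow> nat \<Rightarrow> nat) \<Rightarrow> mvert \<Rightarrow> real" where
  "phi \<sigma> nn v = (case v of Orig _ \<Rightarrow> 1 | New a b j \<Rightarrow> psi \<sigma> nn a b j)"

lemma pv_New_iff2: "New a b j = pv x y n i \<longleftrightarrow> i \<noteq> 0 \<and> i \<noteq> n \<and> a = x \<and> b = y \<and> j = i"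
  by (auto simp: pv_def)

lemma phi_pv: "j \<le> nn a b \<Longrightarrow> 0 < nn a b \<Longrightarrow> phi \<sigma> nn (pv a b (nn a b) j) = psi \<sigma> nn a b j"
  by (auto simp: pv_def phi_def psi_def)

lemma interior:
  assumes n2: "\<forall>(a,b)\<in>Ep. nn a b \<ge> 2"
    and wpos: "\<forall>(a,b)\<in>Ep. w a b > 0"
    and w0: "\<forall>x. w x x = 0"
    and ab: "(a,b) \<in> Ep" and i1: "1 \<le> i" and i2: "i \<le> nn a b - 1"
    and s: "\<sigma> a b > 0"
  shows "laplacian (mod_w w Ep nn) (mod_mu w \<mu> \<sigma> nn) (phi \<sigma> nn) (New a b i) = 2"
proof -
  let ?n = "nn a b"
  have n: "?n \<ge> 2" using n2 ab by auto
  have wab: "w a b > 0" using wpos ab by auto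
  have neq: "a \<noteq> b" using w0 wab by auto
  have iu: "New a b i = pv a b ?n i" using i1 i2 n by (auto simp: pv_def)
  have e1: "mod_edge Ep nn (New a b i) (pv a b ?n (Suc i)) a b i"
    using iu ab i2 n unfolding mod_edge_def by auto
  have e2: "mod_edge Ep nn (New a b i) (pv a b ?n (i - 1)) a b (i - 1)"
    using iu ab i1 i2 n unfolding mod_edge_def by auto
  have S: "{v. mod_w w Ep nn (New a b i) v \<noteq> 0} = {pv a b ?n (i - 1), pv a b ?n (Suc i)}"
  proof (intro equalityI subsetI)
    fix v assume "v \<in> {v. mod_w w Ep nn (New a b i) v \<noteq> 0}"
    then obtain x y j where e: "mod_edge Ep nn (New a b i) v x y j"
      unfolding mod_w_def by (auto split: if_splits)
    have xy: "x = a" "y = b" using e unfolding mod_edge_def by (auto simp: pv_New_iff pv_New_iff2)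
    show "v \<in> {pv a b ?n (i - 1), pv a b ?n (Suc i)}"
      using e unfolding xy mod_edge_def by (auto simp: pv_New_iff pv_New_iff2)
  next
    fix v assume "v \<in> {pv a b ?n (i - 1), pv a b ?n (Suc i)}"
    then show "v \<in> {v. mod_w w Ep nn (New a b i) v \<noteq> 0}"
      using mod_w_val[OF n2 e1, of w] mod_w_val[OF n2 e2, of w] wab n by auto
  qed
  have dist: "pv a b ?n (i - 1) \<noteq> pv a b ?n (Suc i)"
    using neq i1 by (auto simp: pv_def)
  have "laplacian (mod_w w Ep nn) (mod_mu w \<mu> \<sigma> nn) (phi \<sigma> nn) (New a b i)
      = (1 / (2 * w a b * (\<sigma> a b)\<^sup>2 / real ?n)) *
        (real ?n * w a b * (psi \<sigma> nn a b i - psi \<sigma> nn a b (i - 1))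
         + real ?n * w a b * (psi \<sigma> nn a b i - psi \<sigma> nn a b (Suc i)))"
    unfolding laplacian_def S using dist mod_w_val[OF n2 e1, of w] mod_w_val[OF n2 e2, of w]
      phi_pv[of "i - 1" nn a b \<sigma>] phi_pv[of "Suc i" nn a b \<sigma>] i1 i2 n
    by (simp add: mod_mu_def phi_def)
  also have "\<dots> = 2"
  proof -
    obtain k where k: "i = Suc k" using i1 by (cases i) auto
    have nr: "real ?n > 0" using n by simp
    show ?thesis using nr wab s unfolding k psi_def
      by (simp add: field_simps power2_eq_square)
  qed
  finally show ?thesis .
qed



lemma pv_Orig_iff2: "Orig z = pv x y n i \<longleftrightarrow> (i = 0 \<and> z = x) \<or> (i \<noteq> 0 \<and> i = n \<and> z = y)"
  by (auto simp: pv_def)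

lemma key_ineq:
  fixes n w c :: real
  assumes "n \<ge> 2" "w > 0" "c \<ge> 0"
  shows "n * w * (1 - (1 + 2 * c * (1 / n) * (1 - 1 / n))) \<ge> - 2 * w * c"
proof -
  have "n * w * (1 - (1 + 2 * c * (1 / n) * (1 - 1 / n))) = - 2 * w * c * (1 - 1/n)"
    using assms by (simp add: field_simps)
  also have "\<dots> \<ge> - 2 * w * c"
    using assms by (simp add: field_simps mult_nonneg_nonneg)
  finally show ?thesis .
qed

lemma orig:
  assumes n2: "\<forall>(a,b)\<in>Ep. nn a b \<ge> 2"
    and nsym: "\<forall>(a,b)\<in>Ep. nn a b = nn b a"
    and wpos: "\<forall>(a,b)\<in>Ep. w a b > 0"
    and w0: "\<forall>x. w x x = 0"
    and wsym: "\<forall>x y. w x y = w y x"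
    and orient: "\<forall>a b. w a b > 0 \<longrightarrow> ((a,b)\<in>Ep) \<noteq> ((b,a)\<in>Ep)"
    and ssym: "\<forall>y. w x y > 0 \<longrightarrow> \<sigma> x y = \<sigma> y x"
    and fin: "finite {y. w x y > 0}"
    and mu: "\<mu> x > 0"
    and adp: "(\<exists>y. w x y > 0) \<longrightarrow> (1 / \<mu> x) * (\<Sum>y\<in>{y. w x y > 0}. w x y * (\<sigma> x y)\<^sup>2) \<le> 1"
  shows "laplacian (mod_w w Ep nn) (mod_mu w \<mu> \<sigma> nn) (phi \<sigma> nn) (Orig x) \<ge> -2"
proof -
  define Y where "Y = {y. w x y > 0}"
  define g where "g y = (if (x,y) \<in> Ep then New x y 1 else New y x (nn y x - 1))" for y
  define h where "h v = mod_w w Ep nn (Orig x) v * (phi \<sigma> nn (Orig x) - phi \<sigma> nn v)" for v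
  define S where "S = {v. mod_w w Ep nn (Orig x) v \<noteq> 0}"
  have SY: "S \<subseteq> g ` Y"
  proof
    fix v assume "v \<in> S"
    then obtain x' y' j where e: "mod_edge Ep nn (Orig x) v x' y' j"
      unfolding S_def mod_w_def by (auto split: if_splits)
    have ep: "(x',y') \<in> Ep" and jn: "j < nn x' y'" using e by (auto simp: mod_edge_def)
    have n: "nn x' y' \<ge> 2" using n2 ep by auto
    have wp: "w x' y' > 0" using wpos ep by auto
    from e consider "Orig x = pv x' y' (nn x' y') j" "v = pv x' y' (nn x' y') (Suc j)"
      | "v = pv x' y' (nn x' y') j" "Orig x = pv x' y' (nn x' y') (Suc j)"
      unfolding mod_edge_def by auto
    then show "v \<in> g ` Y"
    proof cases
      case 1
      then have "j = 0" "x' = x" using jn by (auto simp: pv_Orig_iff2)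
      then have "v = New x y' 1" "y' \<in> Y" "g y' = New x y' 1"
        using 1 n wp ep by (auto simp: pv_def Y_def g_def)
      then show ?thesis by (metis imageI)
    next
      case 2
      then have "Suc j = nn x' y'" "y' = x" by (auto simp: pv_Orig_iff2)
      note sj = this
      have wxx: "w x x' > 0" using wp sj wsym by metis
      have nep: "(x, x') \<notin> Ep" using orient wxx ep sj by auto
      have nn: "nn x x' = nn x' x" using nsym ep sj by auto
      have "v = New x' x (nn x' x - 1)" using 2 sj n
        by (simp add: pv_def)
      moreover have "x' \<in> Y" using wxx Y_def by simp
      moreover have "g x' = New x' x (nn x' x - 1)" using nep g_def by simp
      ultimately have "v = New x' x (nn x' x - 1)" "x' \<in> Y" "g x' = New x' x (nn x' x - 1)" by auto
      then show ?thesis by (metis imageI)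
    qed
  qed
  have inj: "inj_on g Y"
    unfolding inj_on_def g_def Y_def using w0 by auto
  have finY: "finite Y" using fin Y_def by simp
  have "sum h S = sum h (g ` Y)"
    by (rule sum.mono_neutral_left) (use finY SY in \<open>auto simp: h_def S_def\<close>)
  also have "\<dots> = sum (h \<circ> g) Y" by (rule sum.reindex[OF inj])
  also have "\<dots> \<ge> (\<Sum>y\<in>Y. - 2 * (w x y * (\<sigma> x y)\<^sup>2))"
  proof (rule sum_mono)
    fix y assume yY: "y \<in> Y"
    have wxy: "w x y > 0" using yY Y_def by auto
    show "- 2 * (w x y * (\<sigma> x y)\<^sup>2) \<le> (h \<circ> g) y"
    proof (cases "(x,y) \<in> Ep")
      case True
      have n: "nn x y \<ge> 2" using n2 True by auto
      have e: "mod_edge Ep nn (Orig x) (New x y 1) x y 0"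
        using True n unfolding mod_edge_def by (auto simp: pv_def)
      have "(h \<circ> g) y = real (nn x y) * w x y * (1 - (1 + 2 * (\<sigma> x y)\<^sup>2 * (1 / real (nn x y)) * (1 - 1 / real (nn x y))))"
        using True mod_w_val[OF n2 e, of w] by (simp add: h_def g_def phi_def psi_def)
      also have "\<dots> \<ge> - 2 * w x y * (\<sigma> x y)\<^sup>2"
        by (rule key_ineq) (use n wxy in auto)
      finally show ?thesis by simp
    next
      case False
      then have ep: "(y,x) \<in> Ep" using orient wxy by auto
      have n: "nn y x \<ge> 2" using n2 ep by auto
      have e: "mod_edge Ep nn (Orig x) (New y x (nn y x - 1)) y x (nn y x - 1)"
        using ep n unfolding mod_edge_def by (auto simp: pv_def)
      have r: "real (nn y x - 1) / real (nn y x) = 1 - 1 / real (nn y x)"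
        using n by (simp add: of_nat_diff field_simps)
      have "(h \<circ> g) y = real (nn y x) * w y x * (1 - (1 + 2 * (\<sigma> y x)\<^sup>2 * (1 / real (nn y x)) * (1 - 1 / real (nn y x))))"
        using False mod_w_val[OF n2 e, of w] r by (simp add: h_def g_def phi_def psi_def algebra_simps)
      also have "\<dots> \<ge> - 2 * w y x * (\<sigma> y x)\<^sup>2"
        by (rule key_ineq) (use n wxy wsym in auto)
      finally show ?thesis using wsym ssym wxy by simp
    qed
  qed
  finally have sh: "sum h S \<ge> - 2 * (\<Sum>y\<in>Y. w x y * (\<sigma> x y)\<^sup>2)"
    by (simp add: sum_distrib_left)
  have "(\<Sum>y\<in>Y. w x y * (\<sigma> x y)\<^sup>2) \<le> \<mu> x"
  proof (cases "Y = {}")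
    case True then show ?thesis using mu by simp
  next
    case False
    then have "(1 / \<mu> x) * (\<Sum>y\<in>Y. w x y * (\<sigma> x y)\<^sup>2) \<le> 1" using adp Y_def by auto
    then show ?thesis using mu by (simp add: field_simps)
  qed
  with sh have "sum h S \<ge> - 2 * \<mu> x" by linarith
  then have "(1 / \<mu> x) * sum h S \<ge> -2" using mu by (simp add: field_simps)
  moreover have "laplacian (mod_w w Ep nn) (mod_mu w \<mu> \<sigma> nn) (phi \<sigma> nn) (Orig x) = (1 / \<mu> x) * sum h S"
    unfolding laplacian_def h_def S_def by (simp add: mod_mu_def)
  ultimately show ?thesis by simp
qed



lemma psi_bounds:
  assumes s0: "0 < \<sigma> a b" and s1: "\<sigma> a b \<le> 1" and i: "i \<le> nn a b" and n: "nn a b > 0"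
  shows "1 \<le> psi \<sigma> nn a b i \<and> psi \<sigma> nn a b i \<le> 3/2"
proof -
  define t where "t = real i / real (nn a b)"
  have t0: "0 \<le> t" and t1: "t \<le> 1" using i n by (auto simp: t_def field_simps)
  have p0: "0 \<le> t * (1 - t)" using t0 t1 by simp
  have p1: "t * (1 - t) \<le> 1/4"
  proof -
    have "0 \<le> (t - 1/2)^2" by simp
    then show ?thesis by (simp add: power2_eq_square algebra_simps)
  qed
  have c0: "0 \<le> (\<sigma> a b)\<^sup>2" and c1: "(\<sigma> a b)\<^sup>2 \<le> 1" using s0 s1 by (auto simp: power_le_one)
  have "psi \<sigma> nn a b i = 1 + 2 * (\<sigma> a b)\<^sup>2 * (t * (1 - t))" unfolding psi_def t_def by simp
  moreover have "(\<sigma> a b)\<^sup>2 * (t * (1 - t)) \<le> 1 * (1/4)"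
    by (rule mult_mono) (use c0 c1 p0 p1 in auto)
  moreover have "0 \<le> (\<sigma> a b)\<^sup>2 * (t * (1 - t))" using c0 p0 by simp
  ultimately show ?thesis by (simp only:) linarith
qed

lemma main:
  assumes G: "simple_weighted_graph V w \<mu>" and A: "adapted_weight w \<mu> \<sigma>"
    and O: "orientation w Ep" and N: "admissible_n w nn"
  shows "\<exists>\<phi> :: mvert \<Rightarrow> real.
          (\<forall>v\<in>mod_V V Ep nn. 1 \<le> \<phi> v \<and> \<phi> v \<le> 3/2) \<and>
          (\<forall>v\<in>mod_V V Ep nn.
             laplacian (mod_w w Ep nn) (mod_mu w \<mu> \<sigma> nn) \<phi> v
               + (case v of Orig _ \<Rightarrow> 2 | New _ _ _ \<Rightarrow> - 1) * \<phi> v \<ge> 0)"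
proof -
  have wsym: "\<forall>x y. w x y = w y x" and w0: "\<forall>x. w x x = 0"
    and mu: "\<forall>x\<in>V. \<mu> x > 0" and fin: "\<forall>x\<in>V. finite {y. w x y > 0}"
    using G unfolding simple_weighted_graph_def by auto
  have Epe: "\<forall>(a,b)\<in>Ep. w a b > 0" using O unfolding orientation_def edges_def by auto
  have orient: "\<forall>a b. w a b > 0 \<longrightarrow> ((a,b)\<in>Ep) \<noteq> ((b,a)\<in>Ep)"
    using O unfolding orientation_def edges_def by auto
  have n2: "\<forall>(a,b)\<in>Ep. nn a b \<ge> 2" and nsym: "\<forall>(a,b)\<in>Ep. nn a b = nn b a"
    using N Epe unfolding admissible_n_def edges_def by fastforce+
  have sp: "\<forall>a b. w a b > 0 \<longrightarrow> \<sigma> a b = \<sigma> b a \<and> 0 < \<sigma> a b \<and> \<sigma> a b \<le> 1"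
    using A unfolding adapted_weight_def edges_def by auto
  have adp: "\<forall>x. (\<exists>y. w x y > 0) \<longrightarrow> (1 / \<mu> x) * (\<Sum>y\<in>{y. w x y > 0}. w x y * (\<sigma> x y)\<^sup>2) \<le> 1"
    using A unfolding adapted_weight_def by auto
  have cs: "(\<exists>x. v = Orig x \<and> x \<in> V) \<or> (\<exists>a b i. v = New a b i \<and> (a,b) \<in> Ep \<and> 1 \<le> i \<and> i \<le> nn a b - 1)"
    if "v \<in> mod_V V Ep nn" for v using that unfolding mod_V_def by auto
  have B: "1 \<le> phi \<sigma> nn v \<and> phi \<sigma> nn v \<le> 3/2" if v: "v \<in> mod_V V Ep nn" for v
    using cs[OF v]
  proof (elim disjE exE conjE)
    fix x assume "v = Orig x" then show ?thesis by (simp add: phi_def)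
  next
    fix a b i assume 2: "v = New a b i" "(a,b) \<in> Ep" "1 \<le> i" "i \<le> nn a b - 1"
    then show ?thesis using psi_bounds[of \<sigma> a b i nn] sp Epe n2 by (auto simp: phi_def)
  qed
  have L: "laplacian (mod_w w Ep nn) (mod_mu w \<mu> \<sigma> nn) (phi \<sigma> nn) v
               + (case v of Orig _ \<Rightarrow> 2 | New _ _ _ \<Rightarrow> - 1) * phi \<sigma> nn v \<ge> 0"
    if v: "v \<in> mod_V V Ep nn" for v
    using cs[OF v]
  proof (elim disjE exE conjE)
    fix x assume 1: "v = Orig x" "x \<in> V"
    have "laplacian (mod_w w Ep nn) (mod_mu w \<mu> \<sigma> nn) (phi \<sigma> nn) (Orig x) \<ge> -2"
      by (rule orig[OF n2 nsym Epe w0 wsym orient])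
         (use sp fin mu adp 1 in auto)
    then show ?thesis using 1 by (simp add: phi_def)
  next
    fix a b i assume 2: "v = New a b i" "(a,b) \<in> Ep" "1 \<le> i" "i \<le> nn a b - 1"
    have s: "\<sigma> a b > 0" using sp Epe 2 by auto
    have l: "laplacian (mod_w w Ep nn) (mod_mu w \<mu> \<sigma> nn) (phi \<sigma> nn) (New a b i) = 2"
      using interior[of Ep nn w a b i \<sigma> \<mu>] n2 Epe w0 2 s by blast
    have "psi \<sigma> nn a b i \<le> 3/2" using psi_bounds[of \<sigma> a b i nn] sp Epe n2 2 by auto
    then show ?thesis using 2 l by (simp add: phi_def)
  qed
  show ?thesis using B L by blast
qed


theorem proposition3p5:
  shows "\<exists>C1 C2 C3 :: real. C1 > 0 \<and> C2 > 0 \<and> C3 > 1 \<and>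
    (\<forall>V w \<mu> \<sigma> Ep nn.
       simple_weighted_graph V w \<mu> \<and> adapted_weight w \<mu> \<sigma> \<and> orientation w Ep \<and> admissible_n w nn \<longrightarrow>
       (let U = (\<lambda>v. case v of Orig _ \<Rightarrow> C2 | New _ _ _ \<Rightarrow> - C1) in
        \<exists>\<phi> :: mvert \<Rightarrow> real.
          (\<forall>v\<in>mod_V V Ep nn. 1 \<le> \<phi> v \<and> \<phi> v \<le> C3) \<and>
          (\<forall>v\<in>mod_V V Ep nn.
             laplacian (mod_w w Ep nn) (mod_mu w \<mu> \<sigma> nn) \<phi> v + U v * \<phi> v \<ge> 0)))"
proof -
  show ?thesis
    apply (rule exI[of _ 1], rule exI[of _ 2], rule exI[of _ "3/2"])
    using main by (simp add: Let_def)
qed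

end
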